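(* In the setup described in the context, assume the Levi-Civita connection $\nabla$ of $g$ is locally flat ($R=0$). Let $x\in T_pM$ induce a $Q$-basis, and let $\psi=\angle(x,Q^2x)$ be the $g$-angle, with $\psi\neq\pi/2$. Then $$\tilde r(x)=\tilde r(Qx)=\tilde r(Q^2x)=\tilde r(Q^3x)=\frac{1}{8\cos\psi}(3\tilde\tau^*+\tilde\tau)+\frac18(3\tilde\tau+\tilde\tau^* ).$$
   Context: Let $M$ be a 3-dimensional smooth manifold. Fix a coordinate chart $(x^1,x^2,x^3)$ with coordinate vector fields $\partial_i$. Structures: - $g$ is a Riemannian metric with $g(\partial_1,\partial_1)=g(\partial_2,\partial_2)=A$, $g(\partial_3,\partial_3)=B$ and $g(\partial_i,\partial_j)=0$ for $i\ne j$. Here $A,B$ are smooth positive functions. - $Q$ is the $(1,1)$-tensor field with $Q\partial_1=\partial_2$, $Q\partial_2=-\partial_1$, $Q\partial_3=\partial_3$. - $P=Q^2$ and $\tilde g(x,y)=g(x,Py)$. Curvature: - $\nabla$ and $\tilde\nabla$ are the Levi-Civita connections of $g$ and $\tilde g$, with curvatures $R$ and $\tilde R$ defined by $R(x,y)z=\nabla_x\nabla_yz-\nabla_y\nabla_xz-\nabla_{[x,y]}z$ (similarly for $\tilde R$). - $\tilde R(x,y,z,t)=\tilde g(\tilde R(x,y)z,t)$. - $\tilde\rho(y,z)=\tilde g^{ij}\tilde R(e_i,y,z,e_j)$, $\tilde\tau=\tilde g^{ij}\tilde\rho_{ij}$ and $\tilde\tau^*=g^{ij}\tilde\rho_{ij}$.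 - $\tilde r(x)=\tilde\rho(x,x)/\tilde g(x,x)$. Angles and $Q$-bases: - The $g$-angle is defined by $\cos\angle(u,v)=g(u,v)/\sqrt{g(u,u)g(v,v)}$. - A vector $x$ induces a $Q$-basis if $\{x,Qx,Q^2x\}$ is a basis of $T_pM$. *)

theory Defs
  imports "HOL-Analysis.Analysis"
begin

text \<open>Coordinates: a chart domain U in real^3; the coordinate indices x^1,x^2,x^3
  are represented by the elements 0,1,2 of the index type 3; the coordinate
  vector field d_i at a point is axis i 1. Tensor fields are given by their
  components in the coordinate frame.\<close>

type_synonym cfield = "real^3 \<Rightarrow> 3 \<Rightarrow> 3 \<Rightarrow> real"

definition pd :: "3 \<Rightarrow> (real^3 \<Rightarrow> real) \<Rightarrow> real^3 \<Rightarrow> real" where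
  "pd i f p = deriv (\<lambda>t. f (p + t *\<^sub>R axis i 1)) 0"

definition smooth_on :: "(real^3) set \<Rightarrow> (real^3 \<Rightarrow> real) \<Rightarrow> bool" where
  "smooth_on U f \<longleftrightarrow> (\<forall>js :: 3 list. continuous_on U (foldr pd js f) \<and>
     (\<forall>i. \<forall>p\<in>U. (\<lambda>t. foldr pd js f (p + t *\<^sub>R axis i 1)) differentiable (at 0)))"

definition metric_g :: "(real^3 \<Rightarrow> real) \<Rightarrow> (real^3 \<Rightarrow> real) \<Rightarrow> cfield" where
  "metric_g A B p i j = (if i = j then (if i = 2 then B p else A p) else 0)"

definition Qc :: "3 \<Rightarrow> 3 \<Rightarrow> real" where
  "Qc k i = (if i = 0 \<and> k = 1 then 1 else if i = 1 \<and> k = 0 then -1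
             else if i = 2 \<and> k = 2 then 1 else 0)"

definition Qop :: "real^3 \<Rightarrow> real^3" where
  "Qop x = (\<chi> k. \<Sum>i\<in>UNIV. Qc k i * x $ i)"

definition Pc :: "3 \<Rightarrow> 3 \<Rightarrow> real" where
  "Pc k i = (\<Sum>m\<in>UNIV. Qc k m * Qc m i)"

definition tmetric :: "cfield \<Rightarrow> cfield" where
  "tmetric G p i j = (\<Sum>k\<in>UNIV. Pc k j * G p i k)"

definition ginv :: "cfield \<Rightarrow> cfield" where
  "ginv G p i j = matrix_inv (\<chi> a b. G p a b) $ i $ j"

definition bil :: "cfield \<Rightarrow> real^3 \<Rightarrow> real^3 \<Rightarrow> real^3 \<Rightarrow> real" where
  "bil G p x y = (\<Sum>i\<in>UNIV. \<Sum>j\<in>UNIV. x $ i * y $ j * G p i j)"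

text \<open>Christoffel symbols of the Levi-Civita connection: Chr G p i j k = Gamma^k_{ij},
  nabla_{d_i} d_j = sum_k Gamma^k_{ij} d_k.\<close>
definition Chr :: "cfield \<Rightarrow> real^3 \<Rightarrow> 3 \<Rightarrow> 3 \<Rightarrow> 3 \<Rightarrow> real" where
  "Chr G p i j k = (1/2) * (\<Sum>l\<in>UNIV. ginv G p k l *
      (pd i (\<lambda>q. G q j l) p + pd j (\<lambda>q. G q i l) p - pd l (\<lambda>q. G q i j) p))"

text \<open>R(d_i,d_j)d_k = sum_l Riem G p i j k l d_l, with
  R(x,y)z = nabla_x nabla_y z - nabla_y nabla_x z - nabla_[x,y] z.\<close>
definition Riem :: "cfield \<Rightarrow> real^3 \<Rightarrow> 3 \<Rightarrow> 3 \<Rightarrow> 3 \<Rightarrow> 3 \<Rightarrow> real" where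
  "Riem G p i j k l =
     pd i (\<lambda>q. Chr G q j k l) p - pd j (\<lambda>q. Chr G q i k l) p
     + (\<Sum>m\<in>UNIV. Chr G p j k m * Chr G p i m l - Chr G p i k m * Chr G p j m l)"

definition Riem4 :: "cfield \<Rightarrow> real^3 \<Rightarrow> real^3 \<Rightarrow> real^3 \<Rightarrow> real^3 \<Rightarrow> real^3 \<Rightarrow> real" where
  "Riem4 G p x y z t = (\<Sum>i\<in>UNIV. \<Sum>j\<in>UNIV. \<Sum>k\<in>UNIV. \<Sum>l\<in>UNIV. \<Sum>m\<in>UNIV.
      x $ i * y $ j * z $ k * t $ m * Riem G p i j k l * G p l m)"

definition ricci :: "cfield \<Rightarrow> real^3 \<Rightarrow> real^3 \<Rightarrow> real^3 \<Rightarrow> real" where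
  "ricci G p y z = (\<Sum>i\<in>UNIV. \<Sum>j\<in>UNIV. ginv G p i j * Riem4 G p (axis i 1) y z (axis j 1))"

definition scal :: "cfield \<Rightarrow> real^3 \<Rightarrow> real" where
  "scal G p = (\<Sum>i\<in>UNIV. \<Sum>j\<in>UNIV. ginv G p i j * ricci G p (axis i 1) (axis j 1))"

definition scal_star :: "cfield \<Rightarrow> cfield \<Rightarrow> real^3 \<Rightarrow> real" where
  "scal_star G H p = (\<Sum>i\<in>UNIV. \<Sum>j\<in>UNIV. ginv H p i j * ricci G p (axis i 1) (axis j 1))"

definition rfun :: "cfield \<Rightarrow> real^3 \<Rightarrow> real^3 \<Rightarrow> real" where
  "rfun G p x = ricci G p x x / bil G p x x"

definition g_angle :: "cfield \<Rightarrow> real^3 \<Rightarrow> real^3 \<Rightarrow> real^3 \<Rightarrow> real" where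
  "g_angle G p u v = arccos (bil G p u v / sqrt (bil G p u u * bil G p v v))"

definition Q_basis :: "real^3 \<Rightarrow> bool" where
  "Q_basis x \<longleftrightarrow> card {x, Qop x, Qop (Qop x)} = 3 \<and> independent {x, Qop x, Qop (Qop x)}
      \<and> span {x, Qop x, Qop (Qop x)} = UNIV"

end

theory Submission
  imports Defs
begin


lemma t3: "(3::3) = 0" by simp
lemma UNIV3: "(UNIV::3 set) = {0,1,2}"
  using UNIV_3 t3 by (simp add: insert_commute)
lemma all3: "(\<forall>i::3. P i) \<longleftrightarrow> P 0 \<and> P 1 \<and> P 2"
proof -
  have "(\<forall>i::3. P i) \<longleftrightarrow> (\<forall>i\<in>UNIV. P i)" by simp
  also have "\<dots> \<longleftrightarrow> P 0 \<and> P 1 \<and> P 2" unfolding UNIV3 by simp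
  finally show ?thesis .
qed
lemma sum3: "sum f (UNIV::3 set) = f 0 + f 1 + f 2"
  unfolding UNIV3 by (simp add: add.assoc)

lemma pd_local:
  assumes "open U" "p \<in> U" "\<forall>q\<in>U. f q = g q"
  shows "pd i f p = pd i g p"
  unfolding pd_def
proof (rule deriv_cong_ev[OF _ refl])
  have o: "open ((\<lambda>t::real. p + t *\<^sub>R axis i 1) -` U)"
    by (rule open_vimage[OF assms(1)]) (intro continuous_intros)
  have "0 \<in> (\<lambda>t::real. p + t *\<^sub>R axis i 1) -` U" using assms(2) by simp
  then show "\<forall>\<^sub>F t in nhds 0. f (p + t *\<^sub>R axis i 1) = g (p + t *\<^sub>R axis i 1)"
    using o assms(3) unfolding eventually_nhds by blast
qed

lemma pd_uminus:
  assumes "(\<lambda>t. f (p + t *\<^sub>R axis i 1)) differentiable (at 0)"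
  shows "pd i (\<lambda>q. - f q) p = - pd i f p"
  unfolding pd_def
  apply (rule deriv_minus)
  using assms by (simp add: real_differentiable_def field_differentiable_def)

lemma smooth0:
  assumes "smooth_on U A" "q \<in> U"
  shows "(\<lambda>t. A (q + t *\<^sub>R axis i 1)) differentiable (at 0)"
  using assms unfolding smooth_on_def by (metis foldr.simps(1) id_apply)

lemma smooth1:
  assumes "smooth_on U A" "q \<in> U"
  shows "(\<lambda>t. pd k A (q + t *\<^sub>R axis i 1)) differentiable (at 0)"
proof -
  have "(\<lambda>t. foldr pd [k] A (q + t *\<^sub>R axis i 1)) differentiable (at 0)"
    using assms unfolding smooth_on_def by blast
  then show ?thesis by simp
qed

lemma Pc_eq: "Pc k j = (if k = j then (if j = 2 then 1 else -1) else 0)"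
proof -
  have "\<forall>k j. Pc k j = (if k = j then (if j = 2 then 1 else -1) else 0)"
    unfolding all3 by (simp add: Pc_def sum3 Qc_def)
  then show ?thesis by blast
qed

lemma tmetric_eq: "tmetric (metric_g A B) = metric_g (\<lambda>q. - A q) B"
proof (intro ext)
  fix p i j
  have "\<forall>i j. tmetric (metric_g A B) p i j = metric_g (\<lambda>q. - A q) B p i j"
    unfolding all3 by (simp add: tmetric_def sum3 Pc_eq metric_g_def)
  then show "tmetric (metric_g A B) p i j = metric_g (\<lambda>q. - A q) B p i j" by blast
qed

lemma ginv_diag:
  assumes "A q \<noteq> 0" "B q \<noteq> 0"
  shows "ginv (metric_g A B) q i j = (if i = j then 1 / metric_g A B q i i else 0)"
proof -
  define M where "M = (\<chi> a b. metric_g A B q a b)"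
  define D where "D = (\<chi> a b. if a = b then 1 / metric_g A B q a a else (0::real))"
  have md: "M ** D = mat 1" "D ** M = mat 1"
    unfolding M_def D_def vec_eq_iff matrix_matrix_mult_def mat_def
    using assms unfolding all3 by (simp_all add: sum3 metric_g_def)
  have "matrix_inv M = D"
    unfolding matrix_inv_def
  proof (rule someI2[where a = D])
    show "M ** D = mat 1 \<and> D ** M = mat 1" using md by simp
  next
    fix X assume "M ** X = mat 1 \<and> X ** M = mat 1"
    then have "X = X ** (M ** D)" "X ** M = mat 1" using md by (simp_all add: matrix_mul_rid)
    then show "X = D" by (metis matrix_mul_assoc matrix_mul_lid)
  qed
  then show ?thesis unfolding ginv_def M_def[symmetric] D_def by simp
qed

lemma metric_fun: "(\<lambda>q. metric_g A B q j k) = (if j = k then (if j = 2 then B else A) else (\<lambda>q. 0))"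
  by (auto simp: metric_g_def)

lemma pdG: "pd i (\<lambda>q. metric_g A B q j k) q = (if j = k then (if j = 2 then pd i B q else pd i A q) else 0)"
  unfolding metric_fun by (simp add: pd_def)

lemma mult_if_left: "(if P then a else 0) * b = (if P then a * b else (0::real))" by simp
lemma mult_if_right: "b * (if P then a else 0) = (if P then b * a else (0::real))" by simp
lemma sum_if_const: "(\<Sum>x\<in>S. if P then f x else (0::real)) = (if P then sum f S else 0)"
  by (cases P) simp_all

lemma axis_nth: "axis i (1::real) $ j = (if j = i then 1 else 0)" by (simp add: axis_def)

lemma Chr_diag:
  assumes "A q \<noteq> 0" "B q \<noteq> 0"
  shows "Chr (metric_g A B) q i j k = (pd i (\<lambda>q. metric_g A B q j k) q + pd j (\<lambda>q. metric_g A B q i k) q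
      - pd k (\<lambda>q. metric_g A B q i j) q) / (2 * metric_g A B q k k)"
  unfolding Chr_def ginv_diag[where A=A and B=B and q=q, OF assms] mult_if_left
  by (simp add: sum.delta)

lemma ricci_diag:
  assumes "A q \<noteq> 0" "B q \<noteq> 0"
  shows "ricci (metric_g A B) q y z = (\<Sum>a\<in>UNIV. \<Sum>b\<in>UNIV. y $ a * z $ b * (\<Sum>i\<in>UNIV. Riem (metric_g A B) q i a b i))"
proof -
  have gii: "metric_g A B q i i \<noteq> 0" for i using assms by (simp add: metric_g_def)
  have "Riem4 (metric_g A B) q (axis i 1) y z (axis j 1) =
     (\<Sum>a\<in>UNIV. \<Sum>b\<in>UNIV. \<Sum>l\<in>UNIV. y $ a * z $ b * Riem (metric_g A B) q i a b l * metric_g A B q l j)" for i j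
    unfolding Riem4_def axis_nth mult_if_left mult_if_right
    by (simp add: sum_if_const sum.delta')
  moreover have "(\<Sum>l\<in>UNIV. c * Riem (metric_g A B) q i a b l * metric_g A B q l i)
      = c * Riem (metric_g A B) q i a b i * metric_g A B q i i" for c i a b
    by (simp add: metric_g_def mult_if_right sum.delta' cong: if_cong)
  ultimately have "ricci (metric_g A B) q y z = (\<Sum>i\<in>UNIV. 
     (\<Sum>a\<in>UNIV. \<Sum>b\<in>UNIV. y $ a * z $ b * Riem (metric_g A B) q i a b i))"
    unfolding ricci_def ginv_diag[where A=A and B=B and q=q, OF assms] mult_if_left
    using gii by (simp add: sum.delta' sum_distrib_left)
  also have "\<dots> = (\<Sum>a\<in>UNIV. \<Sum>i\<in>UNIV. \<Sum>b\<in>UNIV. y $ a * z $ b * Riem (metric_g A B) q i a b i)"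
    by (rule sum.swap)
  also have "\<dots> = (\<Sum>a\<in>UNIV. \<Sum>b\<in>UNIV. \<Sum>i\<in>UNIV. y $ a * z $ b * Riem (metric_g A B) q i a b i)"
    by (rule sum.cong[OF refl], rule sum.swap)
  finally show ?thesis
    by (simp add: sum_distrib_left)
qed

definition sg :: "3 \<Rightarrow> 3 \<Rightarrow> 3 \<Rightarrow> real" where
  "sg i j k = (if i = j \<and> ((i = 2) \<noteq> (k = 2)) then -1 else 1)"

lemma pd_const[simp]: "pd i (\<lambda>q. c) q = 0"
  by (simp add: pd_def)

lemma Chr_t:
  assumes "A q \<noteq> 0" "B q \<noteq> 0" and pdm: "\<And>i. pd i (\<lambda>q. - A q) q = - pd i A q"
  shows "Chr (metric_g (\<lambda>q. - A q) B) q i j k = sg i j k * Chr (metric_g A B) q i j k"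
proof -
  have nA: "- A q \<noteq> 0" using assms by simp
  have "\<forall>i j k. Chr (metric_g (\<lambda>q. - A q) B) q i j k = sg i j k * Chr (metric_g A B) q i j k"
    unfolding Chr_diag[where A=A and B=B and q=q, OF assms(1,2)]
      Chr_diag[where A="\<lambda>q. - A q" and B=B and q=q, OF nA assms(2)] pdG
    unfolding all3 using assms(1,2) by (simp add: metric_g_def sg_def pdm)
  then show ?thesis by blast
qed

lemma pd_flip:
  assumes "open U" "p \<in> U" "\<forall>q\<in>U. g1 q = f q" "\<forall>q\<in>U. g2 q = - f q"
    "(\<lambda>t. f (p + t *\<^sub>R axis i 1)) differentiable (at 0)"
  shows "pd i g1 p = - pd i g2 p"
  using pd_local[OF assms(1,2,3)] pd_local[OF assms(1,2,4)] pd_uminus[OF assms(5)] by simp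

lemma quot_diff:
  assumes "smooth_on U F" "smooth_on U H" "p \<in> U" "H p \<noteq> 0"
  shows "(\<lambda>t. pd l F (p + t *\<^sub>R axis i 1) / (2 * H (p + t *\<^sub>R axis i 1))) differentiable (at 0)"
  apply (rule differentiable_divide)
  using assms smooth0[OF assms(2,3)] smooth1[OF assms(1,3)]
  by (auto intro!: differentiable_mult differentiable_const)

lemma pd_Chr_t:
  assumes U: "open U" "p \<in> U" and nz: "\<forall>q\<in>U. A q \<noteq> 0 \<and> B q \<noteq> 0"
    and sA: "smooth_on U A" and sB: "smooth_on U B"
  shows "pd i (\<lambda>q. Chr (metric_g (\<lambda>q. - A q) B) q j k l) p = sg j k l * pd i (\<lambda>q. Chr (metric_g A B) q j k l) p"
proof -
  have pdm: "pd i (\<lambda>q. - A q) q = - pd i A q" if "q \<in> U" for i q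
    using pd_uminus[OF smooth0[OF sA that]] .
  have K1: "\<forall>q\<in>U. Chr (metric_g (\<lambda>q. - A q) B) q j k l = sg j k l * Chr (metric_g A B) q j k l"
    using nz pdm by (auto intro!: Chr_t)
  show ?thesis
  proof (cases "sg j k l = 1")
    case True
    then show ?thesis using pd_local[OF U] K1 by simp
  next
    case False
    then have jk: "k = j" and sgm: "sg j k l = -1" and c: "(j = 2) \<noteq> (l = 2)" by (auto simp: sg_def split: if_splits)
    show ?thesis
    proof (cases "j = 2")
      case True
      then have l2: "l \<noteq> 2" using c by simp
      show ?thesis unfolding sgm
      proof -
        have "pd i (\<lambda>q. Chr (metric_g (\<lambda>q. - A q) B) q j k l) p = - pd i (\<lambda>q. Chr (metric_g A B) q j k l) p"
        proof (rule pd_flip[OF U, where f="\<lambda>q. pd l B q / (2 * A q)"])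
          show "\<forall>q\<in>U. Chr (metric_g (\<lambda>q. - A q) B) q j k l = pd l B q / (2 * A q)"
            using nz pdm True l2 jk by (auto simp: Chr_diag pdG metric_g_def)
          show "\<forall>q\<in>U. Chr (metric_g A B) q j k l = - (pd l B q / (2 * A q))"
            using nz True l2 jk by (auto simp: Chr_diag pdG metric_g_def)
          show "(\<lambda>t. pd l B (p + t *\<^sub>R axis i 1) / (2 * A (p + t *\<^sub>R axis i 1))) differentiable at 0"
            using quot_diff[OF sB sA] U nz by auto
        qed
        then show "pd i (\<lambda>q. Chr (metric_g (\<lambda>q. - A q) B) q j k l) p = - 1 * pd i (\<lambda>q. Chr (metric_g A B) q j k l) p" by simp
      qed
    next
      case False
      then have l2: "l = 2" using c by simp
      show ?thesis unfolding sgm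
      proof -
        have "pd i (\<lambda>q. Chr (metric_g (\<lambda>q. - A q) B) q j k l) p = - pd i (\<lambda>q. Chr (metric_g A B) q j k l) p"
        proof (rule pd_flip[OF U, where f="\<lambda>q. pd l A q / (2 * B q)"])
          show "\<forall>q\<in>U. Chr (metric_g (\<lambda>q. - A q) B) q j k l = pd l A q / (2 * B q)"
            using nz pdm False l2 jk by (auto simp: Chr_diag pdG metric_g_def)
          show "\<forall>q\<in>U. Chr (metric_g A B) q j k l = - (pd l A q / (2 * B q))"
            using nz False l2 jk by (auto simp: Chr_diag pdG metric_g_def)
          show "(\<lambda>t. pd l A (p + t *\<^sub>R axis i 1) / (2 * B (p + t *\<^sub>R axis i 1))) differentiable at 0"
            using quot_diff[OF sA sB] U nz by auto
        qed
        then show "pd i (\<lambda>q. Chr (metric_g (\<lambda>q. - A q) B) q j k l) p = - 1 * pd i (\<lambda>q. Chr (metric_g A B) q j k l) p" by simp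
      qed
    qed
  qed
qed

lemma rho_rel:
  assumes nz: "A p \<noteq> 0" "B p \<noteq> 0" and pdm: "\<And>i. pd i (\<lambda>q. - A q) p = - pd i A p"
    and K2: "\<And>i j k l. pd i (\<lambda>q. Chr (metric_g (\<lambda>q. - A q) B) q j k l) p = sg j k l * pd i (\<lambda>q. Chr (metric_g A B) q j k l) p"
    and K3: "pd 2 (\<lambda>q. Chr (metric_g A B) q 0 0 2) p = pd 2 (\<lambda>q. Chr (metric_g A B) q 1 1 2) p"
  shows "(\<Sum>i\<in>UNIV. Riem (metric_g (\<lambda>q. - A q) B) p i 0 0 i) - (\<Sum>i\<in>UNIV. Riem (metric_g (\<lambda>q. - A q) B) p i 1 1 i)
     = (\<Sum>i\<in>UNIV. Riem (metric_g A B) p i 0 0 i) - (\<Sum>i\<in>UNIV. Riem (metric_g A B) p i 1 1 i)"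
    and "\<forall>a b. a \<noteq> b \<longrightarrow> (\<Sum>i\<in>UNIV. Riem (metric_g (\<lambda>q. - A q) B) p i a b i) = (\<Sum>i\<in>UNIV. Riem (metric_g A B) p i a b i)"
proof -
  note ct = Chr_t[where A=A and B=B and q=p, OF nz pdm]
  note cv = Chr_diag[where A=A and B=B and q=p, OF nz]
  show "(\<Sum>i\<in>UNIV. Riem (metric_g (\<lambda>q. - A q) B) p i 0 0 i) - (\<Sum>i\<in>UNIV. Riem (metric_g (\<lambda>q. - A q) B) p i 1 1 i)
     = (\<Sum>i\<in>UNIV. Riem (metric_g A B) p i 0 0 i) - (\<Sum>i\<in>UNIV. Riem (metric_g A B) p i 1 1 i)"
    unfolding Riem_def sum3 K2 ct
    using nz K3 by (simp add: cv pdG metric_g_def sg_def field_simps)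
  show "\<forall>a b. a \<noteq> b \<longrightarrow> (\<Sum>i\<in>UNIV. Riem (metric_g (\<lambda>q. - A q) B) p i a b i) = (\<Sum>i\<in>UNIV. Riem (metric_g A B) p i a b i)"
    unfolding all3 Riem_def sum3 K2 ct
    using nz by (simp add: cv pdG metric_g_def sg_def field_simps)
qed

lemma Qop_nth: "Qop x $ 0 = - x $ 1" "Qop x $ 1 = x $ 0" "Qop x $ 2 = x $ 2"
  by (simp_all add: Qop_def sum3 Qc_def)

lemma bil_diag: "bil (metric_g A B) p x y = A p * (x $ 0 * y $ 0 + x $ 1 * y $ 1) + B p * (x $ 2 * y $ 2)"
  by (simp add: bil_def sum3 metric_g_def algebra_simps)

lemma final_alg:
  fixes a b al ga s c :: real
  assumes "a \<noteq> 0" "b \<noteq> 0" "a * s + b * c \<noteq> 0" "- a * s + b * c \<noteq> 0"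
  shows "(al * s + ga * c) / (- a * s + b * c) =
    1 / (8 * ((- a * s + b * c) / (a * s + b * c))) * (3 * (2 * al / a + ga / b) + (- 2 * al / a + ga / b))
    + 1 / 8 * (3 * (- 2 * al / a + ga / b) + (2 * al / a + ga / b))"
  using assms by (simp add: field_simps)

lemma cos_part:
  fixes D S :: real
  assumes "\<bar>D\<bar> \<le> S" "S \<noteq> 0"
  shows "cos (arccos (D / S)) = D / S"
proof (rule cos_arccos)
  have S: "S > 0" using assms by linarith
  show "- 1 \<le> D / S" using assms S by (simp add: le_divide_eq abs_le_iff)
  show "D / S \<le> 1" using assms S by (simp add: divide_le_eq abs_le_iff)
qed

lemma sc_part:
  assumes nz: "A p \<noteq> 0" "B p \<noteq> 0"
    and ric: "\<And>y z. ricci (metric_g (\<lambda>q. - A q) B) p y z = al * (y $ 0 * z $ 0 + y $ 1 * z $ 1) + ga * (y $ 2 * z $ 2)"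
  shows "scal (metric_g (\<lambda>q. - A q) B) p = - 2 * al / A p + ga / B p"
    "scal_star (metric_g (\<lambda>q. - A q) B) (metric_g A B) p = 2 * al / A p + ga / B p"
proof -
  have nAp: "- A p \<noteq> 0" using nz by simp
  show "scal (metric_g (\<lambda>q. - A q) B) p = - 2 * al / A p + ga / B p"
    unfolding scal_def ginv_diag[where A="\<lambda>q. - A q" and B=B and q=p, OF nAp nz(2)] ric
    by (simp add: sum3 axis_nth metric_g_def field_simps)
  show "scal_star (metric_g (\<lambda>q. - A q) B) (metric_g A B) p = 2 * al / A p + ga / B p"
    unfolding scal_star_def ginv_diag[where A=A and B=B and q=p, OF nz] ric
    by (simp add: sum3 axis_nth metric_g_def field_simps)
qed

lemma ric_part:
  assumes nz: "A p \<noteq> 0" "B p \<noteq> 0"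
    and off: "\<And>a b. a \<noteq> b \<Longrightarrow> rt a b = 0" and d01: "rt 1 1 = rt 0 0"
    and rt: "\<And>a b. rt a b = (\<Sum>i\<in>UNIV. Riem (metric_g (\<lambda>q. - A q) B) p i a b i)"
  shows "ricci (metric_g (\<lambda>q. - A q) B) p y z = rt 0 0 * (y $ 0 * z $ 0 + y $ 1 * z $ 1) + rt 2 2 * (y $ 2 * z $ 2)"
proof -
  have nAp: "- A p \<noteq> 0" using nz by simp
  have o: "rt 0 1 = 0" "rt 0 2 = 0" "rt 1 0 = 0" "rt 1 2 = 0" "rt 2 0 = 0" "rt 2 1 = 0"
    by (simp_all add: off)
  show ?thesis
    unfolding ricci_diag[where A="\<lambda>q. - A q" and B=B and q=p, OF nAp nz(2)] rt[symmetric]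
    by (simp add: sum3 o d01 algebra_simps)
qed

theorem proposition5p8:
  fixes U :: "(real^3) set" and A B :: "real^3 \<Rightarrow> real" and p x :: "real^3"
  assumes "open U"
    and "\<forall>q\<in>U. A q > 0" and "\<forall>q\<in>U. B q > 0"
    and "smooth_on U A" and "smooth_on U B"
    and "\<forall>q\<in>U. \<forall>i j k l. Riem (metric_g A B) q i j k l = 0"
    and "p \<in> U"
    and "Q_basis x"
    and "g_angle (metric_g A B) p x (Qop (Qop x)) \<noteq> pi / 2"
  shows "rfun (tmetric (metric_g A B)) p x = rfun (tmetric (metric_g A B)) p (Qop x)
    \<and> rfun (tmetric (metric_g A B)) p (Qop x) = rfun (tmetric (metric_g A B)) p (Qop (Qop x))
    \<and> rfun (tmetric (metric_g A B)) p (Qop (Qop x)) = rfun (tmetric (metric_g A B)) p (Qop (Qop (Qop x)))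
    \<and> rfun (tmetric (metric_g A B)) p (Qop (Qop (Qop x))) =
        1 / (8 * cos (g_angle (metric_g A B) p x (Qop (Qop x))))
          * (3 * scal_star (tmetric (metric_g A B)) (metric_g A B) p + scal (tmetric (metric_g A B)) p)
        + 1 / 8 * (3 * scal (tmetric (metric_g A B)) p + scal_star (tmetric (metric_g A B)) (metric_g A B) p)"
proof -
  note U = assms(1,7)
  have nzU: "\<forall>q\<in>U. A q \<noteq> 0 \<and> B q \<noteq> 0" using assms(2,3) by force
  have Ap: "A p > 0" and Bp: "B p > 0" using assms(2,3,7) by auto
  then have nz: "A p \<noteq> 0" "B p \<noteq> 0" by auto
  have nAp: "- A p \<noteq> 0" using nz by simp
  have pdm: "pd i (\<lambda>q. - A q) p = - pd i A p" for i
    using pd_uminus[OF smooth0[OF assms(4,7)]] .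
  have K2: "pd i (\<lambda>q. Chr (metric_g (\<lambda>q. - A q) B) q j k l) p = sg j k l * pd i (\<lambda>q. Chr (metric_g A B) q j k l) p" for i j k l
    using pd_Chr_t[OF U nzU assms(4,5)] .
  have c00: "\<forall>q\<in>U. Chr (metric_g A B) q 0 0 2 = Chr (metric_g A B) q 1 1 2"
  proof
    fix q assume "q \<in> U"
    then have "A q \<noteq> 0" "B q \<noteq> 0" using nzU by auto
    then show "Chr (metric_g A B) q 0 0 2 = Chr (metric_g A B) q 1 1 2"
      unfolding Chr_diag[where A=A and B=B and q=q, OF \<open>A q \<noteq> 0\<close> \<open>B q \<noteq> 0\<close>] pdG
      by (simp add: metric_g_def)
  qed
  have K3: "pd 2 (\<lambda>q. Chr (metric_g A B) q 0 0 2) p = pd 2 (\<lambda>q. Chr (metric_g A B) q 1 1 2) p"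
    by (rule pd_local[OF U c00])
  define rt where "rt a b = (\<Sum>i\<in>UNIV. Riem (metric_g (\<lambda>q. - A q) B) p i a b i)" for a b
  have R0: "(\<Sum>i\<in>UNIV. Riem (metric_g A B) p i a b i) = 0" for a b
    using assms(6,7) by simp
  have off: "rt a b = 0" if "a \<noteq> b" for a b
    using rho_rel(2)[OF nz pdm K2 K3] that R0 unfolding rt_def by simp
  have d01: "rt 1 1 = rt 0 0"
    using rho_rel(1)[OF nz pdm K2 K3] R0 unfolding rt_def by simp
  define al where "al = rt 0 0"
  define ga where "ga = rt 2 2"
  have ric: "ricci (metric_g (\<lambda>q. - A q) B) p y z = al * (y $ 0 * z $ 0 + y $ 1 * z $ 1) + ga * (y $ 2 * z $ 2)" for y z
    unfolding al_def ga_def by (rule ric_part[OF nz off d01 rt_def])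
  have tm: "tmetric (metric_g A B) = metric_g (\<lambda>q. - A q) B" by (rule tmetric_eq)
  note scs = sc_part[OF nz ric]
  define s where "s = x $ 0 * x $ 0 + x $ 1 * x $ 1"
  define c where "c = x $ 2 * x $ 2"
  have rf: "rfun (metric_g (\<lambda>q. - A q) B) p x = (al * s + ga * c) / (- A p * s + B p * c)"
    "rfun (metric_g (\<lambda>q. - A q) B) p (Qop x) = (al * s + ga * c) / (- A p * s + B p * c)"
    "rfun (metric_g (\<lambda>q. - A q) B) p (Qop (Qop x)) = (al * s + ga * c) / (- A p * s + B p * c)"
    "rfun (metric_g (\<lambda>q. - A q) B) p (Qop (Qop (Qop x))) = (al * s + ga * c) / (- A p * s + B p * c)"
    unfolding rfun_def ric bil_diag s_def c_def by (simp_all add: Qop_nth algebra_simps)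
  have s0: "s \<ge> 0" "c \<ge> 0" unfolding s_def c_def by auto
  define S where "S = A p * s + B p * c"
  define D where "D = - A p * s + B p * c"
  have S0: "S \<ge> 0" unfolding S_def using Ap Bp s0 by auto
  have DS: "\<bar>D\<bar> \<le> S" unfolding S_def D_def using Ap Bp s0 by (auto simp: abs_le_iff)
  have b1: "bil (metric_g A B) p x (Qop (Qop x)) = D" "bil (metric_g A B) p x x = S"
      "bil (metric_g A B) p (Qop (Qop x)) (Qop (Qop x)) = S"
    unfolding bil_diag D_def S_def s_def c_def by (simp_all add: Qop_nth algebra_simps)
  have sq: "sqrt (S * S) = S" using S0 by simp
  have ang: "g_angle (metric_g A B) p x (Qop (Qop x)) = arccos (D / S)"
    unfolding g_angle_def b1 sq ..
  have Sn: "S \<noteq> 0"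
  proof
    assume "S = 0"
    then have "g_angle (metric_g A B) p x (Qop (Qop x)) = pi / 2" unfolding ang by simp
    then show False using assms(9) by simp
  qed
  have Dn: "D \<noteq> 0"
  proof
    assume "D = 0"
    then have "g_angle (metric_g A B) p x (Qop (Qop x)) = pi / 2" unfolding ang by simp
    then show False using assms(9) by simp
  qed
  have cosv: "cos (g_angle (metric_g A B) p x (Qop (Qop x))) = D / S"
    unfolding ang by (rule cos_part[OF DS Sn])
  have fin: "(al * s + ga * c) / (- A p * s + B p * c) =
    1 / (8 * (D / S)) * (3 * (2 * al / A p + ga / B p) + (- 2 * al / A p + ga / B p))
    + 1 / 8 * (3 * (- 2 * al / A p + ga / B p) + (2 * al / A p + ga / B p))"
    unfolding D_def S_def by (rule final_alg[OF nz Sn[unfolded S_def] Dn[unfolded D_def]])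
  show ?thesis
    unfolding tm rf cosv scs using fin by simp
qed


end
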